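(* Let $M\geq 2$. For $q\in\mathbb{Z}$ let $c_q\in\mathbb{C}^M$ be the truncated discrete cosine function defined by $c_q[p]:=2\cos\!\big(\tfrac{2\pi pq}{4M-3}\big)$ for $p=0,\ldots,M-1$, and let $E$ be the $M\times M$ diagonal matrix with diagonal entries $\omega_k=e^{2\pi ik/(2M-1)}$, $k=0,\ldots,M-1$. Then the intensity measurement mapping $\mathcal{A}\colon\mathbb{C}^M/\mathbb{T}\to\mathbb{R}^{4M-4}$ defined by $$\mathcal{A}(x):=\{|\langle x,c_q\rangle|^2\}_{q=0}^{2M-2}\cup\{|\langle x,E^*c_q\rangle|^2\}_{q=1}^{2M-3}$$ is injective; that is, if $x,y\in\mathbb{C}^M$ satisfy $|\langle x,c_q\rangle|=|\langle y,c_q\rangle|$ for $q=0,\ldots,2M-2$ and $|\langle x,E^*c_q\rangle|=|\langle y,E^*c_q\rangle|$ for $q=1,\ldots,2M-3$, then $y=\omega x$ for some $\omega\in\mathbb{C}$ with $|\omega|=1$.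
   Context: The inner product on $\mathbb{C}^M$ is $\langle x,y\rangle=\sum_{p}x[p]\overline{y[p]}$, with coordinates indexed $p=0,\ldots,M-1$. $\mathbb{T}$ denotes the unit circle $\{\omega\in\mathbb{C}:|\omega|=1\}$, and $\mathbb{C}^M/\mathbb{T}$ is the set of equivalence classes $\{\omega x:|\omega|=1\}$. $E^*$ is the conjugate transpose of $E$. *)

theory Defs
  imports "HOL-Analysis.Analysis"
begin

text \<open>Vectors in C^M are represented as functions nat => complex; only the
coordinates p < M are relevant.\<close>

definition inner_cM :: "nat \<Rightarrow> (nat \<Rightarrow> complex) \<Rightarrow> (nat \<Rightarrow> complex) \<Rightarrow> complex" where
  "inner_cM M x y = (\<Sum>p<M. x p * cnj (y p))"

definition cosvec :: "nat \<Rightarrow> int \<Rightarrow> nat \<Rightarrow> complex" where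
  "cosvec M q p = complex_of_real (2 * cos (2 * pi * real p * real_of_int q / (4 * real M - 3)))"

definition omega_diag :: "nat \<Rightarrow> nat \<Rightarrow> complex" where
  "omega_diag M k = exp (2 * pi * \<i> * of_nat k / (2 * of_nat M - 1))"

definition Estar_apply :: "nat \<Rightarrow> (nat \<Rightarrow> complex) \<Rightarrow> nat \<Rightarrow> complex" where
  "Estar_apply M v p = cnj (omega_diag M p) * v p"

end

theory Submission
  imports Defs
begin

lemma sum_cos_roots:
  fixes s :: int and N :: nat
  assumes "N > 0" "\<bar>s\<bar> < int N"
  shows "(\<Sum>n<N. cos (2 * pi * real_of_int s * real n / real N)) = (if s = 0 then real N else 0)"
proof (cases "s = 0")
  case True then show ?thesis by simp
next
  case False
  define z where "z = cis (2 * pi * real_of_int s / real N)"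
  have zn: "\<And>n. cos (2 * pi * real_of_int s * real n / real N) = Re (z ^ n)"
  proof -
    fix n :: nat
    have "2 * pi * real_of_int s * real n / real N = real n * (2 * pi * real_of_int s / real N)"
      by simp
    then show "cos (2 * pi * real_of_int s * real n / real N) = Re (z ^ n)"
      unfolding z_def by (simp only: cos_n_Re_cis_pow_n)
  qed
  have zN: "z ^ N = 1"
  proof -
    have "real N * (2 * pi * real_of_int s / real N) = 2 * pi * real_of_int s" using assms by simp
    moreover have "z ^ N = cis (real N * (2 * pi * real_of_int s / real N))"
      unfolding z_def by (rule Complex.DeMoivre)
    ultimately show ?thesis by (simp add: cis_multiple_2pi)
  qed
  have z1: "z \<noteq> 1"
  proof
    assume "z = 1"
    then have "cos (2 * pi * real_of_int s / real N) = 1" unfolding z_def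
      by (metis cis.sel(1) one_complex.sel(1))
    then obtain k :: int where k: "2 * pi * real_of_int s / real N = real_of_int k * 2 * pi"
      by (auto simp: cos_one_2pi_int)
    then have "real_of_int s = real_of_int k * real N" using assms by (simp add: field_simps)
    then have "s = k * int N" by (metis of_int_eq_iff of_int_mult of_int_of_nat_eq)
    with False have "k \<noteq> 0" by auto
    then have "\<bar>k\<bar> * int N \<ge> 1 * int N" by (intro mult_right_mono) auto
    with \<open>s = k * int N\<close> assms show False by (simp add: abs_mult)
  qed
  have "(\<Sum>n<N. z ^ n) = 0" using geometric_sum[OF z1, of N] zN by simp
  then have "(\<Sum>n<N. Re (z ^ n)) = 0" by (metis Re_sum zero_complex.sel(1))
  then show ?thesis using False zn by simp
qed


lemma cos3: "cos (a::real) * cos b * cos c = (cos (a+b+c) + cos (a+b-c) + cos (a-b+c) + cos (a-b-c)) / 4"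
proof -
  have "cos a * cos b * cos c = (cos (a-b) + cos (a+b)) / 2 * cos c" by (simp add: cos_times_cos)
  also have "\<dots> = (cos (a-b) * cos c + cos (a+b) * cos c) / 2" by (simp add: field_simps)
  also have "\<dots> = (cos (a+b+c) + cos (a+b-c) + cos (a-b+c) + cos (a-b-c)) / 4"
  proof -
    have "cos (c - (a+b)) = cos (a+b-c)" "cos (b+c-a) = cos (a-(b+c))"
      by (metis cos_minus minus_diff_eq)+
    then show ?thesis by (simp add: cos_times_cos field_simps)
  qed
  finally show ?thesis .
qed

definition wt :: "nat \<Rightarrow> nat \<Rightarrow> nat \<Rightarrow> real" where
  "wt j p r = of_bool (p + r = j) + of_bool (p = r + j) + of_bool (r = p + j) + of_bool (p = 0 \<and> r = 0 \<and> j = 0)"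

lemma triple:
  fixes p r j N :: nat
  assumes "N > 0" "p + r + j < N"
  shows "(\<Sum>n<N. cos (real p * (2 * pi * real n / real N)) * cos (real r * (2 * pi * real n / real N))
            * cos (real j * (2 * pi * real n / real N))) = real N / 4 * wt j p r"
proof -
  define s1 where "s1 = int p + int r + int j"
  define s2 where "s2 = int p + int r - int j"
  define s3 where "s3 = int p - int r + int j"
  define s4 where "s4 = int p - int r - int j"
  let ?c = "\<lambda>s::int. \<lambda>n::nat. cos (2 * pi * real_of_int s * real n / real N)"
  have eq: "cos (real p * (2 * pi * real n / real N)) * cos (real r * (2 * pi * real n / real N))
            * cos (real j * (2 * pi * real n / real N)) = (?c s1 n + ?c s2 n + ?c s3 n + ?c s4 n) / 4" for n
  proof -
    define x where "x = 2 * pi * real n / real N"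
    have arg: "\<And>s. 2 * pi * real_of_int s * real n / real N = real_of_int s * x"
      unfolding x_def by simp
    have "real p * x + real r * x + real j * x = real_of_int s1 * x"
         "real p * x + real r * x - real j * x = real_of_int s2 * x"
         "real p * x - real r * x + real j * x = real_of_int s3 * x"
         "real p * x - real r * x - real j * x = real_of_int s4 * x"
      unfolding s1_def s2_def s3_def s4_def by (simp_all add: algebra_simps)
    then show ?thesis unfolding arg x_def[symmetric] cos3 by simp
  qed
  have b: "\<bar>s\<bar> < int N" if "s \<in> {s1,s2,s3,s4}" for s using that assms
    unfolding s1_def s2_def s3_def s4_def by auto
  have "(\<Sum>n<N. cos (real p * (2 * pi * real n / real N)) * cos (real r * (2 * pi * real n / real N))
            * cos (real j * (2 * pi * real n / real N)))
     = (\<Sum>n<N. (?c s1 n + ?c s2 n + ?c s3 n + ?c s4 n)) / 4"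
    unfolding eq by (simp add: sum_divide_distrib)
  also have "\<dots> = ((\<Sum>n<N. ?c s1 n) + (\<Sum>n<N. ?c s2 n) + (\<Sum>n<N. ?c s3 n) + (\<Sum>n<N. ?c s4 n)) / 4"
    by (simp add: sum.distrib)
  also have "\<dots> = ((if s1 = 0 then real N else 0) + (if s2 = 0 then real N else 0)
     + (if s3 = 0 then real N else 0) + (if s4 = 0 then real N else 0)) / 4"
    using sum_cos_roots[OF assms(1) b] by simp
  also have "\<dots> = real N / 4 * wt j p r"
    unfolding wt_def s1_def s2_def s3_def s4_def by (auto simp: field_simps)
  finally show ?thesis .
qed


definition Av :: "nat \<Rightarrow> (nat \<Rightarrow> complex) \<Rightarrow> real \<Rightarrow> complex" where
  "Av M a t = (\<Sum>p<M. a p * complex_of_real (2 * cos (real p * t)))"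

definition Tf :: "nat \<Rightarrow> (nat \<Rightarrow> complex) \<Rightarrow> (nat \<Rightarrow> complex) \<Rightarrow> real \<Rightarrow> real" where
  "Tf M a b t = Re (Av M a t * cnj (Av M b t))"

definition Lam :: "nat \<Rightarrow> (nat \<Rightarrow> complex) \<Rightarrow> (nat \<Rightarrow> complex) \<Rightarrow> nat \<Rightarrow> real" where
  "Lam M a b j = (\<Sum>p<M. \<Sum>r<M. Re (a p * cnj (b r)) * wt j p r)"

lemma T_expand:
  "Tf M a b t = (\<Sum>p<M. \<Sum>r<M. Re (a p * cnj (b r)) * (4 * cos (real p * t) * cos (real r * t)))"
proof -
  have "Av M a t * cnj (Av M b t) = (\<Sum>p<M. \<Sum>r<M. (a p * cnj (b r)) * complex_of_real (4 * cos (real p * t) * cos (real r * t)))"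
    unfolding Av_def cnj_sum sum_product by (rule sum.cong, simp, rule sum.cong, simp_all add: algebra_simps)
  then show ?thesis unfolding Tf_def by (simp add: Re_sum)
qed

lemma L_lemma:
  assumes "N > 0" "j + 2 * M < N + 2"
  shows "(\<Sum>n<N. Tf M a b (2 * pi * real n / real N) * cos (real j * (2 * pi * real n / real N)))
         = real N * Lam M a b j"
proof -
  let ?t = "\<lambda>n::nat. 2 * pi * real n / real N"
  have "(\<Sum>n<N. Tf M a b (?t n) * cos (real j * ?t n))
      = (\<Sum>n<N. \<Sum>p<M. \<Sum>r<M. Re (a p * cnj (b r)) * 4 * (cos (real p * ?t n) * cos (real r * ?t n) * cos (real j * ?t n)))"
    unfolding T_expand sum_distrib_right by (intro sum.cong refl) (simp add: mult_ac)
  also have "\<dots> = (\<Sum>p<M. \<Sum>r<M. Re (a p * cnj (b r)) * 4 * (\<Sum>n<N. cos (real p * ?t n) * cos (real r * ?t n) * cos (real j * ?t n)))"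
    by (simp add: sum_distrib_left sum.swap[of _ "{..<N}"])
  also have "\<dots> = (\<Sum>p<M. \<Sum>r<M. Re (a p * cnj (b r)) * 4 * (real N / 4 * wt j p r))"
    using assms by (intro sum.cong refl, subst triple) auto
  also have "\<dots> = real N * Lam M a b j"
    unfolding Lam_def sum_distrib_left by (intro sum.cong refl) (simp add: field_simps)
  finally show ?thesis .
qed


lemma sum_single:
  assumes "finite A" "a \<in> A" "\<And>x. x \<in> A \<Longrightarrow> x \<noteq> a \<Longrightarrow> f x = 0"
  shows "sum f A = f a"
proof -
  have "sum f A = f a + sum f (A - {a})" using assms by (simp add: sum.remove)
  also have "sum f (A - {a}) = 0" using assms by (intro sum.neutral) auto
  finally show ?thesis by simp
qed

lemma wt_sym: "wt j p r = wt j r p"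
  unfolding wt_def by auto

lemma wt_top_pos: "wt (d + l) d l \<ge> 1"
  unfolding wt_def by auto

lemma wt_top_zero: "p \<le> d \<Longrightarrow> r \<le> l \<Longrightarrow> (p, r) \<noteq> (d, l) \<Longrightarrow> wt (d + l) p r = 0"
  unfolding wt_def by auto

lemma Lam_top:
  assumes "d < M" "l < M" "\<And>p. d < p \<Longrightarrow> p < M \<Longrightarrow> a p = 0"
    "\<And>r. l < r \<Longrightarrow> r < M \<Longrightarrow> b r = 0"
  shows "Lam M a b (d + l) = wt (d + l) d l * Re (a d * cnj (b l))"
proof -
  let ?f = "\<lambda>p r. Re (a p * cnj (b r)) * wt (d + l) p r"
  have z: "?f p r = 0" if "p < M" "r < M" "(p, r) \<noteq> (d, l)" for p r
  proof (cases "d < p")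
    case True then show ?thesis using assms(3) that by simp
  next
    case False
    show ?thesis
    proof (cases "l < r")
      case True then show ?thesis using assms(4) that by simp
    next
      case False2: False
      then show ?thesis using False that wt_top_zero[of p d r l] by simp
    qed
  qed
  have "Lam M a b (d + l) = (\<Sum>p<M. \<Sum>r<M. ?f p r)" unfolding Lam_def by simp
  also have "\<dots> = (\<Sum>r<M. ?f d r)"
    using assms(1) z by (intro sum_single) (auto intro!: sum.neutral)
  also have "\<dots> = ?f d l"
    using assms(2) z assms(1) by (intro sum_single) auto
  finally show ?thesis by simp
qed

lemma nonreal_zero:
  fixes z c :: complex
  assumes "Re z = 0" "Re (c * z) = 0" "Im c \<noteq> 0"
  shows "z = 0"
proof -
  have "Re (c * z) = - Im c * Im z" using assms(1) by simp
  with assms have "Im z = 0" by simp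
  with assms(1) show ?thesis by (simp add: complex_eq_iff)
qed

lemma omega_cis: "omega_diag M k = cis (2 * pi * real k / (2 * real M - 1))"
proof -
  have "(2 * of_nat M - 1 :: complex) = complex_of_real (2 * real M - 1)" by simp
  then show ?thesis unfolding omega_diag_def cis_conv_exp by (simp add: field_simps)
qed

lemma omega_Im:
  assumes "d < M" "l < M" "d \<noteq> l"
  shows "Im (omega_diag M d * cnj (omega_diag M l)) \<noteq> 0"
proof -
  define a where "a = 2 * pi * (real d - real l) / (2 * real M - 1)"
  have "omega_diag M d * cnj (omega_diag M l) = cis a"
  proof -
    have cc: "\<And>x. cnj (cis x) = cis (- x)" by (simp add: complex_eq_iff)
    have "2 * pi * real d / (2 * real M - 1) + - (2 * pi * real l / (2 * real M - 1)) = a"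
      unfolding a_def by (simp add: diff_divide_distrib algebra_simps)
    then show ?thesis unfolding omega_cis cc cis_mult by simp
  qed
  moreover have "sin a \<noteq> 0"
  proof -
    have M: "2 * real M - 1 > 0" using assms by simp
    have "real (Suc d) \<le> real M" "real (Suc l) \<le> real M" using assms by (simp_all only: of_nat_le_iff Suc_le_eq)
    then have "2 * \<bar>real d - real l\<bar> < 2 * real M - 1" by (simp add: abs_if)
    then have "\<bar>a\<bar> < pi" unfolding a_def using M
      by (simp add: abs_divide abs_mult divide_less_eq)
    moreover have "a \<noteq> 0" unfolding a_def using assms M by simp
    ultimately show ?thesis using sin_zero_pi_iff by blast
  qed
  ultimately show ?thesis by simp
qed

lemma Lam_antisym: "Lam M a (\<lambda>r. \<i> * complex_of_real \<rho> * a r) j = 0"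
proof -
  let ?g = "\<lambda>p r. \<rho> * Im (a p * cnj (a r)) * wt j p r"
  have e: "Lam M a (\<lambda>r. \<i> * complex_of_real \<rho> * a r) j = (\<Sum>p<M. \<Sum>r<M. ?g p r)"
    unfolding Lam_def by (intro sum.cong refl) (simp add: algebra_simps)
  have "(\<Sum>p<M. \<Sum>r<M. ?g p r) = (\<Sum>r<M. \<Sum>p<M. ?g p r)" by (rule sum.swap)
  also have "\<dots> = - (\<Sum>p<M. \<Sum>r<M. ?g p r)"
    by (simp add: sum_negf[symmetric] wt_sym algebra_simps)
  finally show ?thesis using e by simp
qed

lemma Lam_diff: "Lam M a (\<lambda>r. b r - c r) j = Lam M a b j - Lam M a c j"
  unfolding Lam_def by (simp add: sum_subtractf[symmetric] algebra_simps)

lemma down_induct: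
  fixes M l :: nat
  assumes "\<And>l. l < M \<Longrightarrow> (\<And>r. l < r \<Longrightarrow> r < M \<Longrightarrow> P r) \<Longrightarrow> P l"
  shows "l < M \<Longrightarrow> P l"
proof (induction "M - l" arbitrary: l rule: less_induct)
  case less
  show ?case by (rule assms[OF less.prems]) (rule less.hyps, auto)
qed


definition Dm :: "nat \<Rightarrow> (nat \<Rightarrow> complex) \<Rightarrow> nat \<Rightarrow> complex" where
  "Dm M a p = omega_diag M p * a p"

lemma key_step:
  assumes "d < M" "l < M" "u d \<noteq> 0" "\<And>p. d < p \<Longrightarrow> p < M \<Longrightarrow> u p = 0"
    "\<And>r. l < r \<Longrightarrow> r < M \<Longrightarrow> w r = 0"
    "Lam M u w (d + l) = 0" "Lam M (Dm M u) (Dm M w) (d + l) = 0"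
  shows "Re (u d * cnj (w l)) = 0" and "l \<noteq> d \<Longrightarrow> w l = 0"
proof -
  have w1: "wt (d + l) d l \<noteq> 0" using wt_top_pos[of d l] by simp
  have "Lam M u w (d + l) = wt (d + l) d l * Re (u d * cnj (w l))"
    using assms by (intro Lam_top) auto
  with assms(6) w1 show r1: "Re (u d * cnj (w l)) = 0" by simp
  have "Lam M (Dm M u) (Dm M w) (d + l) = wt (d + l) d l * Re (Dm M u d * cnj (Dm M w l))"
    using assms by (intro Lam_top) (auto simp: Dm_def)
  with assms(7) w1 have "Re (Dm M u d * cnj (Dm M w l)) = 0" by simp
  moreover have "Dm M u d * cnj (Dm M w l) = (omega_diag M d * cnj (omega_diag M l)) * (u d * cnj (w l))"
    unfolding Dm_def by (simp add: algebra_simps)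
  ultimately have r2: "Re ((omega_diag M d * cnj (omega_diag M l)) * (u d * cnj (w l))) = 0" by simp
  assume "l \<noteq> d"
  then have "u d * cnj (w l) = 0"
    using nonreal_zero[OF r1 r2] omega_Im[OF assms(1,2)] by auto
  with assms(3) show "w l = 0" by simp
qed

lemma alg:
  assumes "\<And>j. j \<le> 2 * M - 2 \<Longrightarrow> Lam M u v j = 0"
    "\<And>j. j \<le> 2 * M - 2 \<Longrightarrow> Lam M (Dm M u) (Dm M v) j = 0"
  shows "(\<forall>p<M. u p = 0) \<or> (\<exists>\<rho>::real. \<forall>p<M. v p = \<i> * complex_of_real \<rho> * u p)"
proof (cases "\<forall>p<M. u p = 0")
  case True then show ?thesis by simp
next
  case False
  define S where "S = {p. p < M \<and> u p \<noteq> 0}"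
  have finS: "finite S" unfolding S_def by simp
  have neS: "S \<noteq> {}" using False unfolding S_def by auto
  define d where "d = Max S"
  have dS: "d \<in> S" unfolding d_def using finS neS by (rule Max_in)
  then have dM: "d < M" and ud: "u d \<noteq> 0" unfolding S_def by auto
  have utop: "u p = 0" if "d < p" "p < M" for p
  proof (rule ccontr)
    assume "u p \<noteq> 0"
    then have "p \<in> S" using that unfolding S_def by auto
    then have "p \<le> d" unfolding d_def using finS by simp
    with that show False by simp
  qed
  have jb: "d + l \<le> 2 * M - 2" if "l < M" for l using dM that by simp
  have st1: "d < l \<longrightarrow> v l = 0" if l: "l < M" and ih: "\<And>r. l < r \<Longrightarrow> r < M \<Longrightarrow> d < r \<longrightarrow> v r = 0" for l
  proof
    assume "d < l"
    show "v l = 0"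
      by (rule key_step(2)[OF dM l ud utop _ assms(1)[OF jb[OF l]] assms(2)[OF jb[OF l]]])
         (use ih \<open>d < l\<close> in auto)
  qed
  have v_top: "d < l \<longrightarrow> v l = 0" if "l < M" for l
    using down_induct[of M "\<lambda>l. d < l \<longrightarrow> v l = 0", OF st1] that by blast
  have re0: "Re (u d * cnj (v d)) = 0"
    by (rule key_step(1)[OF dM dM ud utop _ assms(1)[OF jb[OF dM]] assms(2)[OF jb[OF dM]]])
       (use v_top in auto)
  define \<rho> where "\<rho> = Im (v d / u d)"
  define v' where "v' = (\<lambda>r. v r - \<i> * complex_of_real \<rho> * u r)"
  have "Re (v d / u d) = Re (v d * cnj (u d)) / (cmod (u d))^2"
    by (simp add: Re_divide power2_eq_square cmod_def algebra_simps)
  moreover have "Re (v d * cnj (u d)) = Re (u d * cnj (v d))"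
    by (simp add: algebra_simps)
  ultimately have "Re (v d / u d) = 0" using re0 by (simp add: algebra_simps)
  then have "v d / u d = \<i> * complex_of_real \<rho>" unfolding \<rho>_def by (simp add: complex_eq_iff)
  then have v'd: "v' d = 0" unfolding v'_def using ud by (simp add: field_simps)
  have Dv': "Dm M v' = (\<lambda>r. Dm M v r - \<i> * complex_of_real \<rho> * Dm M u r)"
    unfolding v'_def Dm_def by (simp add: algebra_simps fun_eq_iff)
  have e1: "Lam M u v' j = 0" if "j \<le> 2 * M - 2" for j
    unfolding v'_def Lam_diff Lam_antisym using assms(1)[OF that] by simp
  have e2: "Lam M (Dm M u) (Dm M v') j = 0" if "j \<le> 2 * M - 2" for j
    unfolding Dv' Lam_diff Lam_antisym using assms(2)[OF that] by simp
  have st2: "v' l = 0" if l: "l < M" and ih: "\<And>r. l < r \<Longrightarrow> r < M \<Longrightarrow> v' r = 0" for l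
  proof (cases "l = d")
    case True then show ?thesis using v'd by simp
  next
    case False
    show ?thesis
      by (rule key_step(2)[OF dM l ud utop _ e1[OF jb[OF l]] e2[OF jb[OF l]] False])
         (use ih in auto)
  qed
  have v'0: "v' l = 0" if "l < M" for l
    using down_induct[of M "\<lambda>l. v' l = 0", OF st2] that by blast
  have "\<forall>p<M. v p = \<i> * complex_of_real \<rho> * u p"
    using v'0 unfolding v'_def by (simp add: algebra_simps)
  then show ?thesis by blast
qed


lemma Av_add: "Av M (\<lambda>p. x p + y p) t = Av M x t + Av M y t"
  unfolding Av_def by (simp add: algebra_simps sum.distrib)
lemma Av_sub: "Av M (\<lambda>p. x p - y p) t = Av M x t - Av M y t"
  unfolding Av_def by (simp add: algebra_simps sum_subtractf)

lemma Re_pm: "Re ((a + b) * cnj (a - b)) = (cmod a)^2 - (cmod b)^2"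
  using cmod_power2[of a] cmod_power2[of b] by (simp add: algebra_simps power2_eq_square)

lemma T_from_mod:
  assumes "cmod (Av M x t) = cmod (Av M y t)"
  shows "Tf M (\<lambda>p. x p + y p) (\<lambda>p. x p - y p) t = 0"
  unfolding Tf_def Av_add Av_sub Re_pm using assms by simp

lemma Dm_add: "Dm M (\<lambda>p. x p + y p) = (\<lambda>p. Dm M x p + Dm M y p)"
  and Dm_sub: "Dm M (\<lambda>p. x p - y p) = (\<lambda>p. Dm M x p - Dm M y p)"
  unfolding Dm_def by (simp_all add: fun_eq_iff algebra_simps)

lemma cos_even:
  assumes "N > 0" "n \<le> N"
  shows "cos (real p * (2 * pi * real (N - n) / real N)) = cos (real p * (2 * pi * real n / real N))"
proof -
  have "real p * (2 * pi * real (N - n) / real N) = 2 * pi * real p - real p * (2 * pi * real n / real N)"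
    using assms by (simp add: of_nat_diff field_simps)
  moreover have "cos (2 * pi * real p - z) = cos z" for z
    by (simp add: cos_diff cos_integer_2pi sin_integer_2pi)
  ultimately show ?thesis by simp
qed

lemma T_even:
  assumes "N > 0" "n \<le> N"
  shows "Tf M a b (2 * pi * real (N - n) / real N) = Tf M a b (2 * pi * real n / real N)"
  unfolding Tf_def Av_def using cos_even[OF assms] by simp

lemma Lam_Dm:
  assumes "\<And>p r. p < M \<Longrightarrow> r < M \<Longrightarrow> wt j p r \<noteq> 0 \<Longrightarrow> p = r"
  shows "Lam M (Dm M a) (Dm M b) j = Lam M a b j"
  unfolding Lam_def
proof (intro sum.cong refl)
  fix p r assume "p \<in> {..<M}" "r \<in> {..<M}"
  show "Re (Dm M a p * cnj (Dm M b r)) * wt j p r = Re (a p * cnj (b r)) * wt j p r"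
  proof (cases "wt j p r = 0")
    case False
    with assms \<open>p \<in> {..<M}\<close> \<open>r \<in> {..<M}\<close> have "p = r" by auto
    have "omega_diag M p * cnj (omega_diag M p) = 1"
      unfolding omega_cis by (simp add: complex_eq_iff power2_eq_square[symmetric])
    then have "Dm M a p * cnj (Dm M b p) = a p * cnj (b p)"
      unfolding Dm_def by (simp add: algebra_simps)
    with \<open>p = r\<close> show ?thesis by simp
  qed simp
qed


theorem theorem6:
  fixes M :: nat and x y :: "nat \<Rightarrow> complex"
  assumes "M \<ge> 2"
    and "\<And>q::nat. q \<le> 2 * M - 2 \<Longrightarrow>
           cmod (inner_cM M x (cosvec M (int q))) = cmod (inner_cM M y (cosvec M (int q)))"
    and "\<And>q::nat. 1 \<le> q \<Longrightarrow> q \<le> 2 * M - 3 \<Longrightarrow>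
           cmod (inner_cM M x (Estar_apply M (cosvec M (int q))))
             = cmod (inner_cM M y (Estar_apply M (cosvec M (int q))))"
  shows "\<exists>\<omega>::complex. cmod \<omega> = 1 \<and> (\<forall>p<M. y p = \<omega> * x p)"
proof -
  define N where "N = 4 * M - 3"
  define m where "m = 2 * M - 2"
  have N0: "N > 0" and rN: "real N = 4 * real M - 3" using assms(1) unfolding N_def by auto
  define tt where "tt n = 2 * pi * real n / real N" for n :: nat
  define u where "u = (\<lambda>p. x p + y p)"
  define v where "v = (\<lambda>p. x p - y p)"
  have arg: "2 * pi * real p * real_of_int (int q) / (4 * real M - 3) = real p * tt q" for p q
    unfolding tt_def rN by simp
  have meas1: "inner_cM M z (cosvec M (int q)) = Av M z (tt q)" for z q
    unfolding inner_cM_def cosvec_def Av_def arg by simp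
  have meas2: "inner_cM M z (Estar_apply M (cosvec M (int q))) = Av M (Dm M z) (tt q)" for z q
    unfolding inner_cM_def cosvec_def Av_def Estar_apply_def Dm_def arg by (simp add: algebra_simps)
  have H1: "Tf M u v (tt q) = 0" if "q \<le> 2 * M - 2" for q
    unfolding u_def v_def by (rule T_from_mod) (use assms(2)[OF that] meas1 in simp)
  have H2: "Tf M (Dm M u) (Dm M v) (tt q) = 0" if "1 \<le> q" "q \<le> 2 * M - 3" for q
    unfolding u_def v_def Dm_add Dm_sub by (rule T_from_mod) (use assms(3)[OF that] meas2 in simp)
  have Tev: "Tf M a b (tt (N - n)) = Tf M a b (tt n)" if "n \<le> N" for a b n
    unfolding tt_def using T_even[OF N0 that] .
  have H1': "Tf M u v (tt n) = 0" if "n < N" for n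
  proof (cases "n \<le> 2 * M - 2")
    case True then show ?thesis by (rule H1)
  next
    case False
    then have "N - n \<le> 2 * M - 2" "N - (N - n) = n" using that unfolding N_def by auto
    then show ?thesis using H1 Tev[of "N - n" u v] by simp
  qed
  have L1: "Lam M u v j = 0" if "j \<le> 2 * M - 2" for j
  proof -
    have "j + 2 * M < N + 2" using that assms(1) unfolding N_def by simp
    from L_lemma[OF N0 this, of u v] have "real N * Lam M u v j = 0"
      using H1' unfolding tt_def by simp
    then show ?thesis using N0 by simp
  qed
  let ?T = "\<lambda>n. Tf M (Dm M u) (Dm M v) (tt n)"
  have H2': "?T n = 0" if "n < N" "n \<notin> {0, m, m + 1}" for n
  proof (cases "n \<le> 2 * M - 3")
    case True then show ?thesis using H2[of n] that unfolding m_def by simp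
  next
    case False
    then have "1 \<le> N - n" "N - n \<le> 2 * M - 3" "N - (N - n) = n" "n \<le> N"
      using that assms(1) unfolding N_def m_def by auto
    then show ?thesis using H2 Tev[of "N - n" "Dm M u" "Dm M v"] by simp
  qed
  have sub: "{0, m, m + 1} \<subseteq> {..<N}" using assms(1) unfolding N_def m_def by auto
  have sumred: "(\<Sum>n<N. ?T n * c n) = (\<Sum>n\<in>{0, m, m + 1}. ?T n * c n)" for c
  proof (rule sum.mono_neutral_right)
    show "finite {..<N}" by simp
    show "{0, m, m + 1} \<subseteq> {..<N}" by (rule sub)
    show "\<forall>n\<in>{..<N} - {0, m, m + 1}. ?T n * c n = 0"
    proof
      fix n assume "n \<in> {..<N} - {0, m, m + 1}"
      then have "n < N" "n \<notin> {0, m, m + 1}" by auto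
      then show "?T n * c n = 0" using H2' by simp
    qed
  qed
  have m0: "m \<noteq> 0" "m + 1 \<noteq> 0" "m \<noteq> m + 1" using assms(1) unfolding m_def by auto
  have Tm1: "?T (m + 1) = ?T m"
  proof -
    have "N - m = m + 1" "m \<le> N" using assms(1) unfolding N_def m_def by auto
    then show ?thesis using Tev[of m "Dm M u" "Dm M v"] by simp
  qed
  have cm1: "cos (real m * tt (m + 1)) = cos (real m * tt m)"
  proof -
    have "N - m = m + 1" "m \<le> N" using assms(1) unfolding N_def m_def by auto
    then show ?thesis using cos_even[OF N0, of m m] unfolding tt_def by simp
  qed
  have LD0: "Lam M (Dm M u) (Dm M v) 0 = 0"
  proof -
    have "p = r" if "wt 0 p r \<noteq> 0" for p r
      using that unfolding wt_def by (cases "p = r") auto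
    then show ?thesis using Lam_Dm[of M 0 u v] L1[of 0] by auto
  qed
  have LDm: "Lam M (Dm M u) (Dm M v) m = 0"
  proof -
    have "p = r" if "p < M" "r < M" "wt m p r \<noteq> 0" for p r
    proof -
      have "\<not> (p = r + m)" "\<not> (r = p + m)" "\<not> (p = 0 \<and> r = 0 \<and> m = 0)"
        using that(1,2) assms(1) unfolding m_def by auto
      with that(3) have "p + r = m" unfolding wt_def by (cases "p + r = m") auto
      with that(1,2) show "p = r" unfolding m_def by linarith
    qed
    then show ?thesis using Lam_Dm[of M m u v] L1[of m] unfolding m_def by auto
  qed
  have E0: "?T 0 + ?T m + ?T (m + 1) = 0"
  proof -
    have "j + 2 * M < N + 2" if "j \<le> m" for j using that assms(1) unfolding N_def m_def by simp
    from L_lemma[OF N0 this[of 0], of "Dm M u" "Dm M v"] LD0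
    have "(\<Sum>n<N. ?T n * cos (real 0 * tt n)) = 0" unfolding tt_def by simp
    then show ?thesis unfolding sumred using m0 by (simp add: add.assoc)
  qed
  have Em: "?T 0 + ?T m * cos (real m * tt m) + ?T (m + 1) * cos (real m * tt (m + 1)) = 0"
  proof -
    have "m + 2 * M < N + 2" using assms(1) unfolding N_def m_def by simp
    from L_lemma[OF N0 this, of "Dm M u" "Dm M v"] LDm
    have "(\<Sum>n<N. ?T n * cos (real m * tt n)) = 0" unfolding tt_def by simp
    then show ?thesis unfolding sumred using m0 by (simp add: add.assoc tt_def)
  qed
  have C1: "cos (real m * tt m) \<noteq> 1"
  proof
    assume "cos (real m * tt m) = 1"
    then obtain k :: int where k: "real m * tt m = real_of_int k * 2 * pi"
      by (auto simp: cos_one_2pi_int)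
    then have "real m * real m = real_of_int k * real N" unfolding tt_def using N0
      by (simp add: field_simps)
    then have km: "int m * int m = k * int N"
      by (metis of_int_eq_iff of_int_mult of_int_of_nat_eq)
    have N': "int N = 4 * int M - 3" and m': "int m = 2 * int M - 2" using assms(1) unfolding N_def m_def by auto
    have "int N * (4 * k - int N + 2) = 4 * (int m * int m) - int N * int N + 2 * int N"
      using km by (simp add: algebra_simps)
    also have "\<dots> = 1" unfolding N' m' by (simp add: algebra_simps)
    finally have "1 = int N * (4 * k - int N + 2)" by simp
    then have "int N dvd 1" by (metis dvd_triv_left)
    then have "N = 1" by simp
    then show False using assms(1) unfolding N_def by simp
  qed
  have Tm0: "?T m = 0" and T00: "?T 0 = 0"
  proof -
    from E0 Em Tm1 cm1 have e1: "?T 0 + 2 * ?T m = 0" and e2: "?T 0 + 2 * (cos (real m * tt m) * ?T m) = 0"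
      by simp_all
    have "2 * ?T m * (1 - cos (real m * tt m)) = (?T 0 + 2 * ?T m) - (?T 0 + 2 * (cos (real m * tt m) * ?T m))"
      by (simp add: algebra_simps)
    then have "2 * ?T m * (1 - cos (real m * tt m)) = 0" using e1 e2 by simp
    with C1 show "?T m = 0" by simp
    with E0 Tm1 show "?T 0 = 0" by simp
  qed
  have H2'': "?T n = 0" if "n < N" for n
  proof (cases "n \<in> {0, m, m + 1}")
    case True then show ?thesis using Tm0 T00 Tm1 by auto
  next
    case False then show ?thesis using H2'[OF that] by blast
  qed
  have L2: "Lam M (Dm M u) (Dm M v) j = 0" if "j \<le> 2 * M - 2" for j
  proof -
    have "j + 2 * M < N + 2" using that assms(1) unfolding N_def by simp
    from L_lemma[OF N0 this, of "Dm M u" "Dm M v"] have "real N * Lam M (Dm M u) (Dm M v) j = 0"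
      using H2'' unfolding tt_def by simp
    then show ?thesis using N0 by simp
  qed
  from alg[OF L1 L2] show ?thesis
  proof
    assume "\<forall>p<M. u p = 0"
    then have "\<forall>p<M. y p = (-1) * x p" unfolding u_def by (simp add: add_eq_0_iff2)
    then show ?thesis by (intro exI[of _ "-1"]) simp
  next
    assume "\<exists>\<rho>::real. \<forall>p<M. v p = \<i> * complex_of_real \<rho> * u p"
    then obtain \<rho> :: real where r: "\<forall>p<M. v p = \<i> * complex_of_real \<rho> * u p" by blast
    define w where "w = (1 - \<i> * complex_of_real \<rho>) / (1 + \<i> * complex_of_real \<rho>)"
    have nz: "1 + \<i> * complex_of_real \<rho> \<noteq> 0" by (simp add: complex_eq_iff)
    have "cmod (1 - \<i> * complex_of_real \<rho>) = cmod (1 + \<i> * complex_of_real \<rho>)"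
      by (simp add: cmod_def)
    then have w1: "cmod w = 1" unfolding w_def using nz by (simp add: norm_divide)
    have "y p = w * x p" if "p < M" for p
    proof -
      have "x p - y p = \<i> * complex_of_real \<rho> * (x p + y p)" using r that unfolding u_def v_def by simp
      then have "y p * (1 + \<i> * complex_of_real \<rho>) = x p * (1 - \<i> * complex_of_real \<rho>)"
        by (simp add: algebra_simps)
      then show ?thesis unfolding w_def using nz by (simp add: field_simps)
    qed
    then show ?thesis using w1 by blast
  qed
qed

end
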